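(* Let $G = (V,E)$ be an unweighted graph with $n$ vertices, let $A_1,\ldots,A_p$ be non-empty subsets of $V$, and let $\ell, \delta \in \mathbb{N}$. Then either (1) there is a tree $T$ in $G$ of depth at most $4\delta\ell\ln n$ and with at most $4\delta\ell p \ln n$ vertices such that $V(T)\cap A_i \neq \emptyset$ for $i = 1,\ldots,p$; or (2) there is a set $S \subset V$ such that (a) $|N^\delta(S)\cap (V\setminus S)| < \min\{|S|,|V\setminus S|\}/\ell$ and (b) $|N^\delta(V\setminus S)\cap S| < \min\{|S|,|V\setminus S|\}/\ell$.
   Context: For $X\subseteq V$, $N(X)$ denotes the set of vertices at distance at most $1$ from $X$ in $G$ (so $X \subseteq N(X)$); $N^1(X) = N(X)$ and $N^\delta(X) = N(N^{\delta-1}(X))$ for $\delta \ge 2$. *)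

theory Defs
  imports Complex_Main
begin

definition simple_graph :: "'a set \<Rightarrow> ('a \<Rightarrow> 'a \<Rightarrow> bool) \<Rightarrow> bool" where
  "simple_graph V E \<longleftrightarrow> finite V \<and> (\<forall>u v. E u v \<longrightarrow> u \<in> V \<and> v \<in> V)
     \<and> (\<forall>u v. E u v \<longrightarrow> E v u) \<and> (\<forall>v. \<not> E v v)"

definition nbhd :: "'a set \<Rightarrow> ('a \<Rightarrow> 'a \<Rightarrow> bool) \<Rightarrow> 'a set \<Rightarrow> 'a set" where
  "nbhd V E X = X \<union> {v \<in> V. \<exists>u \<in> X. E u v}"

definition nbhd_pow :: "'a set \<Rightarrow> ('a \<Rightarrow> 'a \<Rightarrow> bool) \<Rightarrow> nat \<Rightarrow> 'a set \<Rightarrow> 'a set" where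
  "nbhd_pow V E d X = (nbhd V E ^^ d) X"

text \<open>T is the vertex set of a tree in G rooted at r, with parent function par
  (tree edges are {v, par v} for v in T - {r}), of depth at most D: every vertex
  of T reaches the root within at most D parent steps.\<close>
definition rooted_tree_in ::
  "'a set \<Rightarrow> ('a \<Rightarrow> 'a \<Rightarrow> bool) \<Rightarrow> 'a set \<Rightarrow> 'a \<Rightarrow> ('a \<Rightarrow> 'a) \<Rightarrow> real \<Rightarrow> bool" where
  "rooted_tree_in V E T r par D \<longleftrightarrow>
     T \<subseteq> V \<and> r \<in> T \<and>
     (\<forall>v \<in> T - {r}. par v \<in> T \<and> E v (par v)) \<and>
     (\<forall>v \<in> T. \<exists>k::nat. real k \<le> D \<and> (par ^^ k) v = r)"

end

theory Submission
  imports Defs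
begin

lemma nbhd_mono: "X \<subseteq> Y \<Longrightarrow> nbhd V E X \<subseteq> nbhd V E Y"
  unfolding nbhd_def by auto

lemma nbhd_sup: "X \<subseteq> nbhd V E X" unfolding nbhd_def by auto

lemma np0[simp]: "nbhd_pow V E 0 X = X" by (simp add: nbhd_pow_def)

lemma npSuc: "nbhd_pow V E (Suc k) X = nbhd V E (nbhd_pow V E k X)"
  by (simp add: nbhd_pow_def)

lemma npSuc': "nbhd_pow V E (Suc k) X = nbhd_pow V E k (nbhd V E X)"
  unfolding nbhd_pow_def by (simp only: funpow_Suc_right comp_def)

lemma np_add: "nbhd_pow V E (a + b) X = nbhd_pow V E a (nbhd_pow V E b X)"
  by (simp add: nbhd_pow_def funpow_add)

lemma np_mono: "X \<subseteq> Y \<Longrightarrow> nbhd_pow V E k X \<subseteq> nbhd_pow V E k Y"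
  by (induction k) (auto simp: npSuc intro: nbhd_mono[THEN subsetD])

lemma np_sup: "X \<subseteq> nbhd_pow V E k X"
  by (induction k) (auto simp: npSuc intro: nbhd_sup[THEN subsetD])

lemma np_mono_k: assumes "k \<le> m" shows "nbhd_pow V E k X \<subseteq> nbhd_pow V E m X"
proof -
  have "nbhd_pow V E m X = nbhd_pow V E (m - k) (nbhd_pow V E k X)"
    using np_add[of V E "m-k" k X] assms by simp
  then show ?thesis using np_sup by metis
qed

lemma np_V: "X \<subseteq> V \<Longrightarrow> nbhd_pow V E k X \<subseteq> V"
  by (induction k) (auto simp: npSuc nbhd_def)

lemma nbhd_UN: "nbhd V E (\<Union>x\<in>X. F x) = (\<Union>x\<in>X. nbhd V E (F x))"
  unfolding nbhd_def by auto

lemma np_UN: "nbhd_pow V E k X = (\<Union>x\<in>X. nbhd_pow V E k {x})"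
proof (induction k)
  case 0 then show ?case by auto
next
  case (Suc k) then show ?case by (simp add: npSuc nbhd_UN)
qed

lemma np_sym:
  assumes G: "simple_graph V E"
  shows "y \<in> nbhd_pow V E k {x} \<Longrightarrow> x \<in> nbhd_pow V E k {y}"
proof (induction k arbitrary: y)
  case 0 then show ?case by simp
next
  case (Suc k)
  from Suc.prems have "y \<in> nbhd_pow V E k {x} \<or> (\<exists>u\<in>nbhd_pow V E k {x}. E u y)"
    by (auto simp: npSuc nbhd_def)
  then show ?case
  proof
    assume "y \<in> nbhd_pow V E k {x}"
    then show ?thesis using Suc.IH np_mono_k[of k "Suc k" V E "{y}"] by auto
  next
    assume "\<exists>u\<in>nbhd_pow V E k {x}. E u y"
    then obtain u where u: "u \<in> nbhd_pow V E k {x}" "E u y" by blast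
    have "E y u" "u \<in> V" using u G unfolding simple_graph_def by auto
    then have "{u} \<subseteq> nbhd V E {y}" unfolding nbhd_def by auto
    then have "nbhd_pow V E k {u} \<subseteq> nbhd_pow V E (Suc k) {y}"
      unfolding npSuc' by (rule np_mono)
    then show ?thesis using Suc.IH[OF u(1)] by auto
  qed
qed

lemma np_back:
  assumes G: "simple_graph V E" and "x \<in> nbhd_pow V E k Y"
  shows "\<exists>y\<in>Y. y \<in> nbhd_pow V E k {x}"
proof -
  obtain y where "y \<in> Y" "x \<in> nbhd_pow V E k {y}" using assms(2) np_UN[of V E k Y] by auto
  then show ?thesis using np_sym[OF G] by blast
qed

definition sc :: "'a set \<Rightarrow> ('a \<Rightarrow> 'a \<Rightarrow> bool) \<Rightarrow> nat \<Rightarrow> nat \<Rightarrow> 'a set \<Rightarrow> bool" where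
  "sc V E \<delta> l S \<longleftrightarrow> S \<subset> V
            \<and> real (card (nbhd_pow V E \<delta> S \<inter> (V - S))) < real (min (card S) (card (V - S))) / l
            \<and> real (card (nbhd_pow V E \<delta> (V - S) \<inter> S)) < real (min (card S) (card (V - S))) / l"

definition bc :: "'a set \<Rightarrow> ('a \<Rightarrow> 'a \<Rightarrow> bool) \<Rightarrow> nat \<Rightarrow> 'a \<Rightarrow> nat \<Rightarrow> real" where
  "bc V E \<delta> u i = real (card (nbhd_pow V E (i * \<delta>) {u}))"

lemma nosc:
  assumes G: "simple_graph V E" and H: "\<forall>S. \<not> sc V E \<delta> l S"
    and S: "S \<subseteq> V" "S \<noteq> {}" "real (card S) \<le> real (card V) / 2"
  shows "real (card (nbhd_pow V E \<delta> S - S)) \<ge> real (card S) / l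
       \<or> real (card (nbhd_pow V E \<delta> (V - S) \<inter> S)) \<ge> real (card S) / l"
proof -
  have fin: "finite V" using G unfolding simple_graph_def by auto
  have "finite S" using fin S(1) finite_subset by auto
  then have "card S > 0" using S(2) by auto
  then have "S \<noteq> V" using S(3) by auto
  then have ps: "S \<subset> V" using S(1) by auto
  have cd: "card (V - S) = card V - card S" using card_Diff_subset[OF \<open>finite S\<close> S(1)] .
  have "card S \<le> card (V - S)" using S(3) cd card_mono[OF fin S(1)] by linarith
  then have mn: "min (card S) (card (V - S)) = card S" by simp
  have "nbhd_pow V E \<delta> S \<inter> (V - S) = nbhd_pow V E \<delta> S - S"
    using np_V[OF S(1)] by auto
  then show ?thesis using H ps mn unfolding sc_def by (metis not_less)
qed

lemma step:
  assumes G: "simple_graph V E" and H: "\<forall>S. \<not> sc V E \<delta> l S"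
    and u: "u \<in> V" and j: "j \<ge> 1" and b: "bc V E \<delta> u j \<le> real (card V) / 2"
  shows "bc V E \<delta> u (j+1) \<ge> bc V E \<delta> u j + bc V E \<delta> u j / l
       \<or> bc V E \<delta> u j - bc V E \<delta> u (j - 1) \<ge> bc V E \<delta> u j / l"
proof -
  have fin: "finite V" using G unfolding simple_graph_def by auto
  define S where "S = nbhd_pow V E (j * \<delta>) {u}"
  have SV: "S \<subseteq> V" unfolding S_def using np_V[of "{u}" V E] u by auto
  have Sne: "S \<noteq> {}" unfolding S_def using np_sup[of "{u}"] by auto
  have bj: "bc V E \<delta> u j = real (card S)" unfolding S_def bc_def by simp
  have N1: "nbhd_pow V E \<delta> S = nbhd_pow V E ((j+1) * \<delta>) {u}"
    unfolding S_def using np_add[of V E \<delta> "j*\<delta>" "{u}"] by (simp add: add.commute)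
  have finN1: "finite (nbhd_pow V E ((j+1) * \<delta>) {u})" using np_V[of "{u}" V E] u fin finite_subset by blast
  have SN1: "S \<subseteq> nbhd_pow V E ((j+1) * \<delta>) {u}" unfolding S_def by (rule np_mono_k) simp
  have c1: "real (card (nbhd_pow V E \<delta> S - S)) = bc V E \<delta> u (j+1) - bc V E \<delta> u j"
    unfolding N1 bj using card_Diff_subset[OF finite_subset[OF SN1 finN1] SN1] card_mono[OF finN1 SN1]
    by (simp add: bc_def of_nat_diff)
  define P where "P = nbhd_pow V E ((j - 1) * \<delta>) {u}"
  have PS: "P \<subseteq> S" unfolding P_def S_def by (rule np_mono_k) simp
  have finS: "finite S" using SV fin finite_subset by auto
  have sub: "nbhd_pow V E \<delta> (V - S) \<inter> S \<subseteq> S - P"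
  proof
    fix x assume x: "x \<in> nbhd_pow V E \<delta> (V - S) \<inter> S"
    show "x \<in> S - P"
    proof (rule ccontr)
      assume "x \<notin> S - P"
      then have xP: "x \<in> P" using x by auto
      obtain y where y: "y \<in> V - S" "y \<in> nbhd_pow V E \<delta> {x}" using np_back[OF G] x by blast
      have "nbhd_pow V E \<delta> {x} \<subseteq> nbhd_pow V E \<delta> P" using xP by (intro np_mono) auto
      also have "\<dots> = nbhd_pow V E (\<delta> + (j - 1) * \<delta>) {u}" unfolding P_def by (simp add: np_add)
      also have "\<delta> + (j - 1) * \<delta> = j * \<delta>" using j by (cases j) auto
      finally show False using y unfolding S_def by auto
    qed
  qed
  have "card (nbhd_pow V E \<delta> (V - S) \<inter> S) \<le> card (S - P)"
    using card_mono[OF _ sub] finS by auto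
  also have "card (S - P) = card S - card P" using card_Diff_subset[OF finite_subset[OF PS finS] PS] .
  finally have c2: "real (card (nbhd_pow V E \<delta> (V - S) \<inter> S)) \<le> bc V E \<delta> u j - bc V E \<delta> u (j - 1)"
    using card_mono[OF finS PS] unfolding bj by (simp add: bc_def P_def of_nat_diff)
  have "real (card S) \<le> real (card V) / 2" using b bj by simp
  from nosc[OF G H SV Sne this] c1 c2 bj show ?thesis by auto
qed

lemma first:
  assumes G: "simple_graph V E" and H: "\<forall>S. \<not> sc V E \<delta> l S"
    and u: "u \<in> V" and n2: "card V \<ge> 2" and l: "l \<ge> 1"
  shows "bc V E \<delta> u 1 \<ge> 2"
proof -
  have fin: "finite V" using G unfolding simple_graph_def by auto
  have "real (card {u}) \<le> real (card V) / 2" using n2 by simp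
  from nosc[OF G H _ _ this] u
  have "real (card (nbhd_pow V E \<delta> {u} - {u})) \<ge> 1 / l
       \<or> real (card (nbhd_pow V E \<delta> (V - {u}) \<inter> {u})) \<ge> 1 / l" by simp
  moreover have "1 / real l > 0" using l by simp
  ultimately have "nbhd_pow V E \<delta> {u} - {u} \<noteq> {} \<or> nbhd_pow V E \<delta> (V - {u}) \<inter> {u} \<noteq> {}"
    by (metis card.empty of_nat_0 not_le)
  then obtain w where w: "w \<noteq> u" "w \<in> nbhd_pow V E \<delta> {u}"
  proof
    assume "nbhd_pow V E \<delta> {u} - {u} \<noteq> {}"
    then show ?thesis using that by auto
  next
    assume "nbhd_pow V E \<delta> (V - {u}) \<inter> {u} \<noteq> {}"
    then have "u \<in> nbhd_pow V E \<delta> (V - {u})" by auto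
    then obtain y where "y \<in> V - {u}" "y \<in> nbhd_pow V E \<delta> {u}" using np_back[OF G] by blast
    then show ?thesis using that by auto
  qed
  have fN: "finite (nbhd_pow V E \<delta> {u})" using np_V[of "{u}" V E] u fin finite_subset by blast
  have "{u, w} \<subseteq> nbhd_pow V E \<delta> {u}" using w np_sup[of "{u}" V E \<delta>] by auto
  from card_mono[OF fN this] w have "card (nbhd_pow V E \<delta> {u}) \<ge> 2" by simp
  then show ?thesis unfolding bc_def by simp
qed

lemma bc_mono: assumes G: "simple_graph V E" and u: "u \<in> V"
  shows "bc V E \<delta> u j \<le> bc V E \<delta> u (Suc j)"
proof -
  have fin: "finite V" using G unfolding simple_graph_def by auto
  have fN: "finite (nbhd_pow V E (Suc j * \<delta>) {u})" using np_V[of "{u}" V E] u fin finite_subset by blast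
  have "nbhd_pow V E (j * \<delta>) {u} \<subseteq> nbhd_pow V E (Suc j * \<delta>) {u}" by (rule np_mono_k) simp
  from card_mono[OF fN this] show ?thesis unfolding bc_def by simp
qed

lemma rho_facts:
  assumes l: "(l::nat) \<ge> 1"
  shows "exp (1 / (2 * real l)) \<le> 1 + 1 / real l"
    and "exp (1 / (2 * real l)) ^ 2 * (1 - 1 / real l) \<le> 1"
proof -
  have "norm (1 / (2 * real l)) \<le> 1/2" using l by (simp add: field_simps)
  from exp_bound_lemma[OF this] show "exp (1 / (2 * real l)) \<le> 1 + 1 / real l" using l by simp
  have e2: "exp (1 / (2 * real l)) ^ 2 = exp (1 / real l)"
    by (simp add: power2_eq_square exp_add[symmetric])
  have "1 - 1 / real l \<le> exp (- (1 / real l))" using exp_ge_add_one_self[of "- (1 / real l)"] by simp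
  then have "exp (1 / real l) * (1 - 1 / real l) \<le> exp (1 / real l) * exp (- (1 / real l))"
    by (intro mult_left_mono) auto
  also have "\<dots> = 1" by (simp add: exp_add[symmetric])
  finally show "exp (1 / (2 * real l)) ^ 2 * (1 - 1 / real l) \<le> 1" using e2 by simp
qed

lemma growth:
  assumes G: "simple_graph V E" and H: "\<forall>S. \<not> sc V E \<delta> l S"
    and u: "u \<in> V" and n2: "card V \<ge> 2" and l: "l \<ge> 1"
  shows "(\<forall>i<j. bc V E \<delta> u i \<le> real (card V) / 2) \<Longrightarrow> exp (1 / (2 * real l)) ^ j \<le> bc V E \<delta> u j"
proof (induction j rule: less_induct)
  case (less j)
  define \<rho> where "\<rho> = exp (1 / (2 * real l))"
  have r1: "\<rho> \<le> 1 + 1 / real l" and r2: "\<rho>^2 * (1 - 1 / real l) \<le> 1"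
    using rho_facts[OF l] unfolding \<rho>_def by auto
  have rpos: "\<rho> > 0" unfolding \<rho>_def by simp
  have b0: "bc V E \<delta> u 0 = 1" unfolding bc_def by simp
  have b1: "bc V E \<delta> u 1 \<ge> 2" by (rule first[OF G H u n2 l])
  have lpos: "real l \<ge> 1" using l by simp
  show ?case
  proof (cases j)
    case 0 then show ?thesis using b0 by simp
  next
    case (Suc m)
    show ?thesis
    proof (cases m)
      case 0
      have "\<rho> \<le> 2" using r1 lpos by (smt (verit) divide_le_eq_1)
      then show ?thesis using b1 Suc 0 unfolding \<rho>_def by simp
    next
      case (Suc k)
      have jk: "j = Suc (Suc k)" using Suc \<open>j = Suc m\<close> by simp
      have ihk: "\<rho> ^ k \<le> bc V E \<delta> u k" using less.IH[of k] less.prems jk unfolding \<rho>_def by auto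
      have ihk1: "\<rho> ^ Suc k \<le> bc V E \<delta> u (Suc k)" using less.IH[of "Suc k"] less.prems jk unfolding \<rho>_def by auto
      have small: "bc V E \<delta> u (Suc k) \<le> real (card V) / 2" using less.prems jk by auto
      have mono: "bc V E \<delta> u (Suc k) \<le> bc V E \<delta> u (Suc (Suc k))" by (rule bc_mono[OF G u])
      have bk0: "bc V E \<delta> u k \<ge> 0" unfolding bc_def by simp
      from step[OF G H u _ small]
      have "bc V E \<delta> u (Suc (Suc k)) \<ge> bc V E \<delta> u (Suc k) + bc V E \<delta> u (Suc k) / l
        \<or> bc V E \<delta> u (Suc k) - bc V E \<delta> u k \<ge> bc V E \<delta> u (Suc k) / l" by simp
      then show ?thesis
      proof
        assume A: "bc V E \<delta> u (Suc (Suc k)) \<ge> bc V E \<delta> u (Suc k) + bc V E \<delta> u (Suc k) / l"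
        have "\<rho> ^ j = \<rho> * \<rho> ^ Suc k" using jk by simp
        also have "\<dots> \<le> (1 + 1 / real l) * bc V E \<delta> u (Suc k)"
          using r1 ihk1 rpos by (intro mult_mono) auto
        also have "\<dots> \<le> bc V E \<delta> u j" using A jk by (simp add: algebra_simps)
        finally show ?thesis unfolding \<rho>_def .
      next
        assume B: "bc V E \<delta> u (Suc k) - bc V E \<delta> u k \<ge> bc V E \<delta> u (Suc k) / l"
        then have B': "bc V E \<delta> u k \<le> bc V E \<delta> u (Suc k) * (1 - 1 / real l)"
          by (simp add: algebra_simps)
        have "\<rho> ^ j = \<rho>^2 * \<rho> ^ k" using jk by (simp add: power2_eq_square)
        also have "\<dots> \<le> \<rho>^2 * bc V E \<delta> u k" using ihk rpos by (intro mult_left_mono) auto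
        also have "\<dots> \<le> \<rho>^2 * (bc V E \<delta> u (Suc k) * (1 - 1 / real l))"
          using B' rpos by (intro mult_left_mono) auto
        also have "\<dots> = (\<rho>^2 * (1 - 1 / real l)) * bc V E \<delta> u (Suc k)" by simp
        also have "\<dots> \<le> 1 * bc V E \<delta> u (Suc k)"
          using r2 bc_mono[OF G u, of \<delta> k] bk0 by (intro mult_right_mono) auto
        also have "\<dots> \<le> bc V E \<delta> u j" using mono jk by simp
        finally show ?thesis unfolding \<rho>_def .
      qed
    qed
  qed
qed

lemma big:
  assumes G: "simple_graph V E" and H: "\<forall>S. \<not> sc V E \<delta> l S"
    and u: "u \<in> V" and n2: "card V \<ge> 2" and l: "l \<ge> 1"
    and K: "K = nat \<lfloor>2 * real l * ln (real (card V) / 2)\<rfloor> + 1"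
  shows "real (card (nbhd_pow V E (K * \<delta>) {u})) > real (card V) / 2"
proof (rule ccontr)
  assume "\<not> ?thesis"
  then have bK: "bc V E \<delta> u K \<le> real (card V) / 2" unfolding bc_def by simp
  have fin: "finite V" using G unfolding simple_graph_def by auto
  have fN: "finite (nbhd_pow V E (K * \<delta>) {u})" using np_V[of "{u}" V E] u fin finite_subset by blast
  have "\<forall>i<K. bc V E \<delta> u i \<le> real (card V) / 2"
  proof (intro allI impI)
    fix i assume "i < K"
    then have "nbhd_pow V E (i * \<delta>) {u} \<subseteq> nbhd_pow V E (K * \<delta>) {u}" by (intro np_mono_k) simp
    from card_mono[OF fN this] have "bc V E \<delta> u i \<le> bc V E \<delta> u K" unfolding bc_def by simp
    then show "bc V E \<delta> u i \<le> real (card V) / 2" using bK by simp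
  qed
  from growth[OF G H u n2 l this] bK
  have le: "exp (1 / (2 * real l)) ^ K \<le> real (card V) / 2" by simp
  have lnn: "ln (real (card V) / 2) \<ge> 0" using n2 by simp
  then have fl: "\<lfloor>2 * real l * ln (real (card V) / 2)\<rfloor> \<ge> 0" using l by simp
  have "real K > 2 * real l * ln (real (card V) / 2)"
    unfolding K using fl by (simp add: of_nat_nat) linarith
  then have "real K * (1 / (2 * real l)) > ln (real (card V) / 2)" using l
    by (simp add: field_simps)
  then have "exp (real K * (1 / (2 * real l))) > exp (ln (real (card V) / 2))" by simp
  also have "exp (ln (real (card V) / 2)) = real (card V) / 2" using n2 by simp
  finally have "exp (real K * (1 / (2 * real l))) > real (card V) / 2" .
  moreover have "exp (real K * (1 / (2 * real l))) = exp (1 / (2 * real l)) ^ K"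
    by (rule exp_of_nat_mult)
  ultimately show False using le by linarith
qed

lemma connect:
  assumes G: "simple_graph V E" and u: "u \<in> V" and v: "v \<in> V"
    and bu: "real (card (nbhd_pow V E R {u})) > real (card V) / 2"
    and bv: "real (card (nbhd_pow V E R {v})) > real (card V) / 2"
  shows "v \<in> nbhd_pow V E (R + R) {u}"
proof -
  have fin: "finite V" using G unfolding simple_graph_def by auto
  have su: "nbhd_pow V E R {u} \<subseteq> V" using np_V[of "{u}" V E] u by auto
  have sv: "nbhd_pow V E R {v} \<subseteq> V" using np_V[of "{v}" V E] v by auto
  have "nbhd_pow V E R {u} \<inter> nbhd_pow V E R {v} \<noteq> {}"
  proof
    assume d: "nbhd_pow V E R {u} \<inter> nbhd_pow V E R {v} = {}"
    have "card (nbhd_pow V E R {u} \<union> nbhd_pow V E R {v}) = card (nbhd_pow V E R {u}) + card (nbhd_pow V E R {v})"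
      using d finite_subset[OF su fin] finite_subset[OF sv fin] by (simp add: card_Un_disjoint)
    moreover have "card (nbhd_pow V E R {u} \<union> nbhd_pow V E R {v}) \<le> card V"
      using su sv fin by (intro card_mono) auto
    ultimately show False using bu bv by linarith
  qed
  then obtain w where w: "w \<in> nbhd_pow V E R {u}" "w \<in> nbhd_pow V E R {v}" by blast
  have "v \<in> nbhd_pow V E R {w}" using np_sym[OF G w(2)] .
  also have "\<dots> \<subseteq> nbhd_pow V E R (nbhd_pow V E R {u})" using w(1) by (intro np_mono) auto
  also have "\<dots> = nbhd_pow V E (R + R) {u}" by (simp add: np_add)
  finally show ?thesis .
qed

lemma tree:
  fixes D :: real and D' p :: nat and a :: "nat \<Rightarrow> 'a"
  assumes G: "simple_graph V E" and r: "r \<in> V"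
    and reach: "\<forall>v\<in>V. v \<in> nbhd_pow V E D' {r}"
    and DD: "real D' \<le> D" "1 \<le> D" and p: "p \<ge> 1"
    and a: "\<forall>i\<in>{1..p}. a i \<in> A i \<and> a i \<in> V" and a1: "a 1 = r"
  shows "\<exists>T r par. rooted_tree_in V E T r par D \<and> real (card T) \<le> real p * D
            \<and> (\<forall>i \<in> {1..p}. T \<inter> A i \<noteq> {})"
proof -
  define dd where "dd v = (LEAST k. v \<in> nbhd_pow V E k {r})" for v
  have ddin: "v \<in> nbhd_pow V E (dd v) {r}" and ddle: "dd v \<le> D'" if "v \<in> V" for v
    using reach that unfolding dd_def by (auto intro: LeastI Least_le)
  have dd0: "v = r" if "v \<in> V" "dd v = 0" for v using ddin[OF that(1)] that(2) by simp
  have ddr: "dd r = 0" unfolding dd_def by (rule Least_eq_0) simp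
  have ex: "\<exists>u. E v u \<and> Suc (dd u) = dd v" if v: "v \<in> V" "dd v > 0" for v
  proof -
    obtain m where m: "dd v = Suc m" using v(2) gr0_implies_Suc by blast
    have "v \<in> nbhd V E (nbhd_pow V E m {r})" using ddin[OF v(1)] m by (simp add: npSuc)
    moreover have nm: "v \<notin> nbhd_pow V E m {r}" using not_less_Least[of m "\<lambda>k. v \<in> nbhd_pow V E k {r}"] m
      unfolding dd_def by auto
    ultimately obtain u where u: "u \<in> nbhd_pow V E m {r}" "E u v" unfolding nbhd_def by auto
    have uV: "u \<in> V" using u(2) G unfolding simple_graph_def by auto
    have "dd u \<le> m" using u(1) unfolding dd_def by (rule Least_le)
    moreover have "\<not> dd u < m"
    proof
      assume "dd u < m"
      have "v \<in> nbhd V E (nbhd_pow V E (dd u) {r})" using ddin[OF uV] u(2) v(1) unfolding nbhd_def by auto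
      then have "v \<in> nbhd_pow V E (Suc (dd u)) {r}" by (simp add: npSuc)
      also have "\<dots> \<subseteq> nbhd_pow V E m {r}" using \<open>dd u < m\<close> by (intro np_mono_k) simp
      finally show False using nm by simp
    qed
    ultimately have "dd u = m" by simp
    moreover have "E v u" using u(2) G unfolding simple_graph_def by auto
    ultimately show ?thesis using m by auto
  qed
  define par where "par v = (SOME u. E v u \<and> Suc (dd u) = dd v)" for v
  have par: "E v (par v) \<and> Suc (dd (par v)) = dd v \<and> par v \<in> V" if "v \<in> V" "dd v > 0" for v
  proof -
    have "E v (par v) \<and> Suc (dd (par v)) = dd v" unfolding par_def by (rule someI_ex[OF ex[OF that]])
    then show ?thesis using G unfolding simple_graph_def by auto
  qed
  have it: "(par ^^ i) v \<in> V \<and> dd ((par ^^ i) v) = dd v - i" if "v \<in> V" "i \<le> dd v" for v i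
    using that(2)
  proof (induction i)
    case 0 then show ?case using that(1) by simp
  next
    case (Suc i)
    then have h: "(par ^^ i) v \<in> V" "dd ((par ^^ i) v) = dd v - i" by auto
    have "dd ((par ^^ i) v) > 0" using h(2) Suc.prems by simp
    from par[OF h(1) this] h Suc.prems show ?case by auto
  qed
  define T where "T = {r} \<union> (\<Union>i\<in>{1..p}. (\<lambda>k. (par ^^ k) (a i)) ` {..<dd (a i)})"
  have TV: "T \<subseteq> V" unfolding T_def using r it a by auto
  have rt: "rooted_tree_in V E T r par D"
    unfolding rooted_tree_in_def
  proof (intro conjI)
    show "T \<subseteq> V" by (rule TV)
    show "r \<in> T" unfolding T_def by simp
  next
   show "\<forall>v \<in> T - {r}. par v \<in> T \<and> E v (par v)"
   proof
    fix v assume v: "v \<in> T - {r}"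
    then obtain i k where ik: "i \<in> {1..p}" "k < dd (a i)" "v = (par ^^ k) (a i)" unfolding T_def by auto
    have ai: "a i \<in> V" using a ik(1) by auto
    have vi: "v \<in> V" "dd v = dd (a i) - k" using it[OF ai, of k] ik by auto
    have "dd v > 0" using vi ik by simp
    from par[OF vi(1) this] have pv: "E v (par v)" "par v \<in> V" "Suc (dd (par v)) = dd v" by auto
    have "par v = (par ^^ Suc k) (a i)" using ik(3) by simp
    have "par v \<in> T"
    proof (cases "Suc k < dd (a i)")
      case True then show ?thesis using \<open>par v = (par ^^ Suc k) (a i)\<close> ik(1) unfolding T_def by blast
    next
      case False
      then have "dd (par v) = 0" using pv(3) vi(2) ik(2) by simp
      then have "par v = r" using dd0 pv(2) by simp
      then show ?thesis unfolding T_def by simp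
    qed
    then show "par v \<in> T \<and> E v (par v)" using pv by simp
   qed
  next
   show "\<forall>v \<in> T. \<exists>k::nat. real k \<le> D \<and> (par ^^ k) v = r"
   proof
    fix v assume v: "v \<in> T"
    then have vV: "v \<in> V" using TV by auto
    have "(par ^^ dd v) v = r" using it[OF vV, of "dd v"] dd0 by simp
    moreover have "real (dd v) \<le> D" using ddle[OF vV] DD(1) by linarith
    ultimately show "\<exists>k::nat. real k \<le> D \<and> (par ^^ k) v = r" by blast
   qed
  qed
  have hit: "\<forall>i \<in> {1..p}. T \<inter> A i \<noteq> {}"
  proof
    fix i assume i: "i \<in> {1..p}"
    have "a i \<in> T"
    proof (cases "dd (a i) = 0")
      case True then show ?thesis using dd0 a i unfolding T_def by auto
    next
      case False
      then have "a i \<in> (\<lambda>k. (par ^^ k) (a i)) ` {..<dd (a i)}" by (auto intro: image_eqI[of _ _ 0])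
      then show ?thesis using i unfolding T_def by blast
    qed
    then show "T \<inter> A i \<noteq> {}" using a i by auto
  qed
  have "card T \<le> card {r} + card (\<Union>i\<in>{1..p}. (\<lambda>k. (par ^^ k) (a i)) ` {..<dd (a i)})"
    unfolding T_def by (rule card_Un_le)
  also have "card (\<Union>i\<in>{1..p}. (\<lambda>k. (par ^^ k) (a i)) ` {..<dd (a i)}) \<le> (\<Sum>i\<in>{1..p}. card ((\<lambda>k. (par ^^ k) (a i)) ` {..<dd (a i)}))"
    by (rule card_UN_le) simp
  also have "\<dots> \<le> (\<Sum>i\<in>{1..p}. dd (a i))"
    by (intro sum_mono) (metis card_image_le card_lessThan finite_lessThan)
  also have "(\<Sum>i\<in>{1..p}. dd (a i)) = dd (a 1) + (\<Sum>i\<in>{Suc 1..p}. dd (a i))"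
    using p by (simp add: sum.atLeast_Suc_atMost)
  also have "(\<Sum>i\<in>{Suc 1..p}. dd (a i)) \<le> (\<Sum>i\<in>{Suc 1..p}. D')"
    using a by (intro sum_mono) (auto intro: ddle)
  finally have cT: "card T \<le> 1 + (p - 1) * D'" using a1 ddr by simp
  have "real (card T) \<le> 1 + real (p - 1) * real D'" using cT by (metis of_nat_1 of_nat_add of_nat_le_iff of_nat_mult)
  also have "\<dots> \<le> 1 + real (p - 1) * D" using DD(1) by (intro add_left_mono mult_left_mono) auto
  also have "\<dots> \<le> D + real (p - 1) * D" using DD(2) by simp
  also have "\<dots> = real p * D" using p by (simp add: of_nat_diff algebra_simps)
  finally show ?thesis using rt hit by blast
qed

lemma ln2_half: "ln (2::real) \<ge> 1/2"
proof -
  have "ln (exp (1/2::real)) \<le> ln 2" using exp_half_le2 by (subst ln_le_cancel_iff) auto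
  then show ?thesis by simp
qed

theorem lemma11:
  fixes V :: "'a set" and E :: "'a \<Rightarrow> 'a \<Rightarrow> bool"
    and A :: "nat \<Rightarrow> 'a set" and p l \<delta> :: nat
  assumes "simple_graph V E"
    and "card V \<ge> 2"
    and "p \<ge> 1" and "l \<ge> 1" and "\<delta> \<ge> 1"
    and "\<And>i. i \<in> {1..p} \<Longrightarrow> A i \<subseteq> V \<and> A i \<noteq> {}"
  shows "(\<exists>T r par. rooted_tree_in V E T r par (4 * \<delta> * l * ln (card V))
            \<and> real (card T) \<le> 4 * \<delta> * l * p * ln (card V)
            \<and> (\<forall>i \<in> {1..p}. T \<inter> A i \<noteq> {}))
       \<or> (\<exists>S. S \<subset> V
            \<and> real (card (nbhd_pow V E \<delta> S \<inter> (V - S))) < real (min (card S) (card (V - S))) / l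
            \<and> real (card (nbhd_pow V E \<delta> (V - S) \<inter> S)) < real (min (card S) (card (V - S))) / l)"
proof (rule disjCI)
  note G = assms(1) and n2 = assms(2) and p = assms(3) and l = assms(4) and d = assms(5)
  assume nq: "\<not> (\<exists>S. S \<subset> V
            \<and> real (card (nbhd_pow V E \<delta> S \<inter> (V - S))) < real (min (card S) (card (V - S))) / l
            \<and> real (card (nbhd_pow V E \<delta> (V - S) \<inter> S)) < real (min (card S) (card (V - S))) / l)"
  have H: "\<forall>S. \<not> sc V E \<delta> l S" unfolding sc_def using nq[unfolded not_ex] .
  define K where "K = nat \<lfloor>2 * real l * ln (real (card V) / 2)\<rfloor> + 1"
  define D' where "D' = K * \<delta> + K * \<delta>"
  define D where "D = 4 * real \<delta> * real l * ln (real (card V))"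
  define a where "a i = (SOME x. x \<in> A i)" for i
  define r where "r = a 1"
  have a: "\<forall>i\<in>{1..p}. a i \<in> A i \<and> a i \<in> V"
  proof
    fix i assume i: "i \<in> {1..p}"
    then have "a i \<in> A i" unfolding a_def using assms(6)[OF i] by (auto intro: someI_ex)
    then show "a i \<in> A i \<and> a i \<in> V" using assms(6)[OF i] by auto
  qed
  have rV: "r \<in> V" unfolding r_def using a p by auto
  have reach: "\<forall>v\<in>V. v \<in> nbhd_pow V E D' {r}"
  proof
    fix v assume v: "v \<in> V"
    show "v \<in> nbhd_pow V E D' {r}"
      unfolding D'_def by (rule connect[OF G rV v big[OF G H rV n2 l K_def] big[OF G H v n2 l K_def]])
  qed
  have lnn: "ln (real (card V) / 2) \<ge> 0" using n2 by simp
  then have fl: "\<lfloor>2 * real l * ln (real (card V) / 2)\<rfloor> \<ge> 0" using l by simp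
  have Kb: "real K \<le> 2 * real l * ln (real (card V) / 2) + 1"
    unfolding K_def using fl by (simp add: of_nat_nat)
  have lnsplit: "ln (real (card V) / 2) = ln (real (card V)) - ln 2" using n2 by (simp add: ln_div)
  have "real D' = 2 * real \<delta> * real K" unfolding D'_def by simp
  also have "\<dots> \<le> 2 * real \<delta> * (2 * real l * ln (real (card V) / 2) + 1)"
    using Kb by (intro mult_left_mono) auto
  also have "\<dots> = D - real \<delta> * (4 * real l * ln 2 - 2)" unfolding D_def lnsplit by (simp add: algebra_simps)
  also have "\<dots> \<le> D"
  proof -
    have "4 * real l * ln 2 - 2 \<ge> 0" using ln2_half l
    proof -
      have "real l * ln 2 \<ge> 1 * (1/2)" using l ln2_half by (intro mult_mono) auto
      then show ?thesis by simp
    qed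
    then show ?thesis by simp
  qed
  finally have D1: "real D' \<le> D" .
  have "ln (real (card V)) \<ge> ln 2" using n2 by simp
  then have "ln (real (card V)) \<ge> 1/2" using ln2_half by linarith
  moreover have "\<delta> * l \<ge> 1" using l d by simp
  then have "real \<delta> * real l \<ge> 1" by (metis of_nat_1 of_nat_le_iff of_nat_mult)
  ultimately have "real \<delta> * real l * ln (real (card V)) \<ge> 1/2"
    using mult_mono[of 1 "real \<delta> * real l" "1/2" "ln (real (card V))"] by simp
  then have D2: "1 \<le> D" unfolding D_def by simp
  from tree[OF G rV reach D1 D2 p a r_def[symmetric]] obtain T r' par where
    T: "rooted_tree_in V E T r' par D" "real (card T) \<le> real p * D" "\<forall>i \<in> {1..p}. T \<inter> A i \<noteq> {}"
    by blast
  have e: "real (4 * \<delta> * l * p) * ln (card V) = real p * D" unfolding D_def by simp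
  have e2: "real (4 * \<delta> * l) * ln (card V) = D" unfolding D_def by simp
  show "\<exists>T r par. rooted_tree_in V E T r par (4 * \<delta> * l * ln (card V))
            \<and> real (card T) \<le> 4 * \<delta> * l * p * ln (card V)
            \<and> (\<forall>i \<in> {1..p}. T \<inter> A i \<noteq> {})"
    unfolding e e2 using T by blast
qed

end
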